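(* Let $(A,\rho,[-,-])$ be a Lie algebroid and let $\nabla^{(1)},\nabla^{(2)},\nabla^{(3)}$ be flat linear connections on $(A,\rho)$, i.e. $R_{\nabla^{(i)}}=0$ for $i=1,2,3$. Then for all $u,v,w\in\underline{\mathrm{Sec}}(A)$, $$R_{[\nabla^{(1)},\nabla^{(2)},\nabla^{(3)}]}(u,v)w=2\nabla^{(2)}_{[u,v]}w+\sum_{i\neq j}(-1)^{i+j}[\nabla^{(i)}_u,\nabla^{(j)}_v]w,$$ where $[\nabla^{(1)},\nabla^{(2)},\nabla^{(3)}]:=\nabla^{(1)}-\nabla^{(2)}+\nabla^{(3)}$, the sum runs over ordered pairs $(i,j)$ with $i,j\in\{1,2,3\}$, $i\neq j$, and $[\nabla^{(i)}_u,\nabla^{(j)}_v]w:=\nabla^{(i)}_u\nabla^{(j)}_v w-(-1)^{\widetilde u\widetilde v}\nabla^{(j)}_v\nabla^{(i)}_u w$.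
   Context: All objects are $\mathbb{Z}_2$-graded (supergeometry); the Grassmann parity of an object $x$ is denoted $\widetilde{x}\in\mathbb{Z}_2$. An anchored vector bundle is a vector bundle $\pi: A\to M$ of supermanifolds with a vector bundle homomorphism over the identity $\rho: A\to\mathsf{T}M$; it induces an even $C^\infty(M)$-module map $\rho:\underline{\mathrm{Sec}}(A)\to\mathrm{Vect}(M)$, $\rho_u:=\rho(u)$. A Lie algebroid is an anchored vector bundle together with an $\mathbb{R}$-bilinear bracket $[-,-]$ on $\underline{\mathrm{Sec}}(A)$ such that $\widetilde{[u,v]}=\widetilde u+\widetilde v$, $[u,v]=-(-1)^{\widetilde u\widetilde v}[v,u]$, $[u,fv]=\rho_u(f)v+(-1)^{\widetilde u\widetilde f}f[u,v]$, and $[u,[v,w]]=[[u,v],w]+(-1)^{\widetilde u\widetilde v}[v,[u,w]]$ for all sections $u,v,w$ and $f\in C^\infty(M)$. A linear connection on $(A,\rho)$ is an $\mathbb{R}$-bilinear map $\nabla:\underline{\mathrm{Sec}}(A)\times\underline{\mathrm{Sec}}(A)\to\underline{\mathrm{Sec}}(A)$ with $\widetilde{\nabla_u v}=\widetilde u+\widetilde v$, $\nabla_{fu}v=f\nabla_u v$, and $\nabla_u(fv)=\rho_u(f)v+(-1)^{\widetilde u\widetilde f}f\nabla_u v$. The curvature of $\nabla$ is $R_\nabla(u,v)w:=\nabla_u\nabla_v w-(-1)^{\widetilde u\widetilde v}\nabla_v\nabla_u w-\nabla_{[u,v]}w$. *)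

theory Defs
  imports Main "HOL.Real_Vector_Spaces"
begin

text \<open>Algebraic model: C(M) is a Z2-graded real algebra 'f with homogeneous parts
  GF False (even) and GF True (odd); sections form a Z2-graded real vector space 's
  with homogeneous parts GS False, GS True, and a left C(M)-module action sm.\<close>

definition sgn2 :: "bool \<Rightarrow> bool \<Rightarrow> real" where
  "sgn2 a b = (if a \<and> b then -1 else 1)"

definition graded_space :: "(bool \<Rightarrow> 'a::real_vector set) \<Rightarrow> bool" where
  "graded_space G \<longleftrightarrow>
     (\<forall>a. 0 \<in> G a \<and> (\<forall>x\<in>G a. \<forall>y\<in>G a. x + y \<in> G a) \<and> (\<forall>c. \<forall>x\<in>G a. c *\<^sub>R x \<in> G a))
   \<and> G False \<inter> G True = {0}
   \<and> (\<forall>x. \<exists>xe xo. xe \<in> G False \<and> xo \<in> G True \<and> x = xe + xo)"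

definition supercomm_algebra :: "(bool \<Rightarrow> 'f::real_algebra_1 set) \<Rightarrow> bool" where
  "supercomm_algebra GF \<longleftrightarrow> graded_space GF \<and> 1 \<in> GF False
   \<and> (\<forall>a b. \<forall>f\<in>GF a. \<forall>g\<in>GF b. f * g \<in> GF (a \<noteq> b) \<and> f * g = sgn2 a b *\<^sub>R (g * f))"

definition graded_module ::
  "(bool \<Rightarrow> 'f::real_algebra_1 set) \<Rightarrow> (bool \<Rightarrow> 's::real_vector set) \<Rightarrow> ('f \<Rightarrow> 's \<Rightarrow> 's) \<Rightarrow> bool" where
  "graded_module GF GS sm \<longleftrightarrow> supercomm_algebra GF \<and> graded_space GS
   \<and> (\<forall>s. sm 1 s = s)
   \<and> (\<forall>f g s. sm (f * g) s = sm f (sm g s))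
   \<and> (\<forall>f g s. sm (f + g) s = sm f s + sm g s)
   \<and> (\<forall>f s t. sm f (s + t) = sm f s + sm f t)
   \<and> (\<forall>c f s. sm (c *\<^sub>R f) s = c *\<^sub>R sm f s \<and> sm f (c *\<^sub>R s) = c *\<^sub>R sm f s)
   \<and> (\<forall>a b. \<forall>f\<in>GF a. \<forall>s\<in>GS b. sm f s \<in> GS (a \<noteq> b))"

text \<open>Anchor: an even C(M)-linear map from sections to vector fields, i.e. to
  graded derivations of C(M) (a section of parity a goes to a derivation of parity a).\<close>
definition anchor ::
  "(bool \<Rightarrow> 'f::real_algebra_1 set) \<Rightarrow> (bool \<Rightarrow> 's::real_vector set) \<Rightarrow> ('f \<Rightarrow> 's \<Rightarrow> 's)
   \<Rightarrow> ('s \<Rightarrow> 'f \<Rightarrow> 'f) \<Rightarrow> bool" where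
  "anchor GF GS sm rho \<longleftrightarrow>
     (\<forall>u v f. rho (u + v) f = rho u f + rho v f)
   \<and> (\<forall>g u f. rho (sm g u) f = g * rho u f)
   \<and> (\<forall>u f g. rho u (f + g) = rho u f + rho u g)
   \<and> (\<forall>u c f. rho u (c *\<^sub>R f) = c *\<^sub>R rho u f)
   \<and> (\<forall>a b. \<forall>u\<in>GS a. \<forall>f\<in>GF b. rho u f \<in> GF (a \<noteq> b)
        \<and> (\<forall>g. rho u (f * g) = rho u f * g + sgn2 a b *\<^sub>R (f * rho u g)))"

definition lie_algebroid ::
  "(bool \<Rightarrow> 'f::real_algebra_1 set) \<Rightarrow> (bool \<Rightarrow> 's::real_vector set) \<Rightarrow> ('f \<Rightarrow> 's \<Rightarrow> 's)
   \<Rightarrow> ('s \<Rightarrow> 'f \<Rightarrow> 'f) \<Rightarrow> ('s \<Rightarrow> 's \<Rightarrow> 's) \<Rightarrow> bool" where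
  "lie_algebroid GF GS sm rho br \<longleftrightarrow> graded_module GF GS sm \<and> anchor GF GS sm rho
   \<and> (\<forall>u v w. br (u + v) w = br u w + br v w \<and> br u (v + w) = br u v + br u w)
   \<and> (\<forall>c u v. br (c *\<^sub>R u) v = c *\<^sub>R br u v \<and> br u (c *\<^sub>R v) = c *\<^sub>R br u v)
   \<and> (\<forall>a b. \<forall>u\<in>GS a. \<forall>v\<in>GS b. br u v \<in> GS (a \<noteq> b))
   \<and> (\<forall>a b. \<forall>u\<in>GS a. \<forall>v\<in>GS b. br u v = - (sgn2 a b *\<^sub>R br v u))
   \<and> (\<forall>a c. \<forall>u\<in>GS a. \<forall>f\<in>GF c. \<forall>v.
        br u (sm f v) = sm (rho u f) v + sgn2 a c *\<^sub>R sm f (br u v))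
   \<and> (\<forall>a b. \<forall>u\<in>GS a. \<forall>v\<in>GS b. \<forall>w.
        br u (br v w) = br (br u v) w + sgn2 a b *\<^sub>R br v (br u w))"

definition linear_connection ::
  "(bool \<Rightarrow> 'f::real_algebra_1 set) \<Rightarrow> (bool \<Rightarrow> 's::real_vector set) \<Rightarrow> ('f \<Rightarrow> 's \<Rightarrow> 's)
   \<Rightarrow> ('s \<Rightarrow> 'f \<Rightarrow> 'f) \<Rightarrow> ('s \<Rightarrow> 's \<Rightarrow> 's) \<Rightarrow> bool" where
  "linear_connection GF GS sm rho nabla \<longleftrightarrow>
     (\<forall>u v w. nabla (u + v) w = nabla u w + nabla v w \<and> nabla u (v + w) = nabla u v + nabla u w)
   \<and> (\<forall>c u v. nabla (c *\<^sub>R u) v = c *\<^sub>R nabla u v \<and> nabla u (c *\<^sub>R v) = c *\<^sub>R nabla u v)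
   \<and> (\<forall>a b. \<forall>u\<in>GS a. \<forall>v\<in>GS b. nabla u v \<in> GS (a \<noteq> b))
   \<and> (\<forall>f u v. nabla (sm f u) v = sm f (nabla u v))
   \<and> (\<forall>a c. \<forall>u\<in>GS a. \<forall>f\<in>GF c. \<forall>v.
        nabla u (sm f v) = sm (rho u f) v + sgn2 a c *\<^sub>R sm f (nabla u v))"

definition curvature ::
  "('s::real_vector \<Rightarrow> 's \<Rightarrow> 's) \<Rightarrow> ('s \<Rightarrow> 's \<Rightarrow> 's) \<Rightarrow> bool \<Rightarrow> bool \<Rightarrow> 's \<Rightarrow> 's \<Rightarrow> 's \<Rightarrow> 's" where
  "curvature br nabla a b u v w =
     nabla u (nabla v w) - sgn2 a b *\<^sub>R nabla v (nabla u w) - nabla (br u v) w"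

definition flat ::
  "(bool \<Rightarrow> 's::real_vector set) \<Rightarrow> ('s \<Rightarrow> 's \<Rightarrow> 's) \<Rightarrow> ('s \<Rightarrow> 's \<Rightarrow> 's) \<Rightarrow> bool" where
  "flat GS br nabla \<longleftrightarrow>
     (\<forall>a b. \<forall>u\<in>GS a. \<forall>v\<in>GS b. \<forall>w. curvature br nabla a b u v w = 0)"

definition conn_comm ::
  "('s::real_vector \<Rightarrow> 's \<Rightarrow> 's) \<Rightarrow> ('s \<Rightarrow> 's \<Rightarrow> 's) \<Rightarrow> bool \<Rightarrow> bool \<Rightarrow> 's \<Rightarrow> 's \<Rightarrow> 's \<Rightarrow> 's" where
  "conn_comm n1 n2 a b u v w = n1 u (n2 v w) - sgn2 a b *\<^sub>R n2 v (n1 u w)"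

end

theory Submission
  imports Defs
begin

lemma add_hom_diff:
  fixes f :: "'a::ab_group_add \<Rightarrow> 'b::ab_group_add"
  assumes "\<And>x y. f (x + y) = f x + f y"
  shows "f (x - y) = f x - f y"
proof -
  have h: "f (x - y + y) = f (x - y) + f y" by (rule assms)
  have "x - y + y = x" by simp
  then have "f x = f (x - y) + f y" using h by simp
  then show ?thesis by (simp add: eq_diff_eq)
qed

lemma pairs_set:
  "{(i,j). i \<in> {1,2,3::nat} \<and> j \<in> {1,2,3::nat} \<and> i \<noteq> j} =
   {(1,2),(1,3),(2,1),(2,3),(3,1),(3,2)}"
  by auto

lemma keyg:
  fixes x11 x12 x13 x21 x22 x23 x31 x32 x33 y11 y12 y13 y21 y22 y23 y31 y32 y33 z1 z2 z3 :: "'s::ab_group_add"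
  assumes "x11 - y11 - z1 = 0" "x22 - y22 - z2 = 0" "x33 - y33 - z3 = 0"
  shows "((x11 - x12 + x13) - (x21 - x22 + x23) + (x31 - x32 + x33))
       - ((y11 - y12 + y13) - (y21 - y22 + y23) + (y31 - y32 + y33))
       - (z1 - z2 + z3)
     = (z2 + z2) + ((- (x12 - y21)) + ((x13 - y31) + ((- (x21 - y12))
        + ((- (x23 - y32)) + ((x31 - y13) + (- (x32 - y23)))))))"
proof -
  have e: "x11 = y11 + z1" "x22 = y22 + z2" "x33 = y33 + z3"
    using assms by (simp_all add: algebra_simps)
  show ?thesis unfolding e by (simp add: algebra_simps)
qed

lemma key:
  fixes x11 x12 x13 x21 x22 x23 x31 x32 x33 y11 y12 y13 y21 y22 y23 y31 y32 y33 z1 z2 z3 :: "'s::real_vector"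
  assumes "x11 - s *\<^sub>R y11 - z1 = 0" "x22 - s *\<^sub>R y22 - z2 = 0" "x33 - s *\<^sub>R y33 - z3 = 0"
  shows "((x11 - x12 + x13) - (x21 - x22 + x23) + (x31 - x32 + x33))
       - s *\<^sub>R ((y11 - y12 + y13) - (y21 - y22 + y23) + (y31 - y32 + y33))
       - (z1 - z2 + z3)
     = 2 *\<^sub>R z2 + ((- (x12 - s *\<^sub>R y21)) + ((x13 - s *\<^sub>R y31) + ((- (x21 - s *\<^sub>R y12))
        + ((- (x23 - s *\<^sub>R y32)) + ((x31 - s *\<^sub>R y13) + (- (x32 - s *\<^sub>R y23)))))))"
  unfolding scaleR_diff_right scaleR_add_right scaleR_minus_right scaleR_2
  by (rule keyg) (rule assms)+

theorem mainTheorem5: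
  fixes GF :: "bool \<Rightarrow> 'f::real_algebra_1 set"
    and GS :: "bool \<Rightarrow> 's::real_vector set"
    and sm :: "'f \<Rightarrow> 's \<Rightarrow> 's"
    and rho :: "'s \<Rightarrow> 'f \<Rightarrow> 'f"
    and br :: "'s \<Rightarrow> 's \<Rightarrow> 's"
    and N :: "nat \<Rightarrow> 's \<Rightarrow> 's \<Rightarrow> 's"
  assumes "lie_algebroid GF GS sm rho br"
    and "\<And>i. i \<in> {1,2,3} \<Longrightarrow> linear_connection GF GS sm rho (N i)"
    and "\<And>i. i \<in> {1,2,3} \<Longrightarrow> flat GS br (N i)"
    and "u \<in> GS a" and "v \<in> GS b"
  shows "curvature br (\<lambda>x y. N 1 x y - N 2 x y + N 3 x y) a b u v w =
           2 *\<^sub>R N 2 (br u v) w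
         + (\<Sum>(i,j)\<in>{(i,j). i \<in> {1,2,3::nat} \<and> j \<in> {1,2,3} \<and> i \<noteq> j}.
              (-1::real) ^ (i + j) *\<^sub>R conn_comm (N i) (N j) a b u v w)"
proof -
  have add: "\<And>x y z. N i z (x + y) = N i z x + N i z y" if "i \<in> {1,2,3}" for i
    using assms(2)[OF that] unfolding linear_connection_def by blast
  have dif: "\<And>x y z. N i z (x - y) = N i z x - N i z y" if "i \<in> {1,2,3}" for i
    by (rule add_hom_diff[where f="N i _"], rule add[OF that])
  have fl: "N i u (N i v w) - sgn2 a b *\<^sub>R N i v (N i u w) - N i (br u v) w = 0"
    if "i \<in> {1,2,3}" for i
    using assms(3)[OF that] assms(4,5) unfolding flat_def curvature_def by blast
  have a1: "\<And>x y z. N 1 z (x + y) = N 1 z x + N 1 z y" using add by simp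
  have a2: "\<And>x y z. N 2 z (x + y) = N 2 z x + N 2 z y" using add by simp
  have a3: "\<And>x y z. N 3 z (x + y) = N 3 z x + N 3 z y" using add by simp
  have d1: "\<And>x y z. N 1 z (x - y) = N 1 z x - N 1 z y" using dif by simp
  have d2: "\<And>x y z. N 2 z (x - y) = N 2 z x - N 2 z y" using dif by simp
  have d3: "\<And>x y z. N 3 z (x - y) = N 3 z x - N 3 z y" using dif by simp
  have L: "curvature br (\<lambda>x y. N 1 x y - N 2 x y + N 3 x y) a b u v w = ((N 1 u (N 1 v w) - N 1 u (N 2 v w) + N 1 u (N 3 v w)) - (N 2 u (N 1 v w) - N 2 u (N 2 v w) + N 2 u (N 3 v w)) + (N 3 u (N 1 v w) - N 3 u (N 2 v w) + N 3 u (N 3 v w))) - sgn2 a b *\<^sub>R ((N 1 v (N 1 u w) - N 1 v (N 2 u w) + N 1 v (N 3 u w)) - (N 2 v (N 1 u w) - N 2 v (N 2 u w) + N 2 v (N 3 u w)) + (N 3 v (N 1 u w) - N 3 v (N 2 u w) + N 3 v (N 3 u w))) - (N 1 (br u v) w - N 2 (br u v) w + N 3 (br u v) w)"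
    unfolding curvature_def by (simp only: a1 a2 a3 d1 d2 d3)
  have R: "(\<Sum>(i,j)\<in>{(i,j). i \<in> {1,2,3::nat} \<and> j \<in> {1,2,3} \<and> i \<noteq> j}.
              (-1::real) ^ (i + j) *\<^sub>R conn_comm (N i) (N j) a b u v w) = ((- (N 1 u (N 2 v w) - sgn2 a b *\<^sub>R N 2 v (N 1 u w))) + ((N 1 u (N 3 v w) - sgn2 a b *\<^sub>R N 3 v (N 1 u w)) + ((- (N 2 u (N 1 v w) - sgn2 a b *\<^sub>R N 1 v (N 2 u w))) + ((- (N 2 u (N 3 v w) - sgn2 a b *\<^sub>R N 3 v (N 2 u w))) + ((N 3 u (N 1 v w) - sgn2 a b *\<^sub>R N 1 v (N 3 u w)) + (- (N 3 u (N 2 v w) - sgn2 a b *\<^sub>R N 2 v (N 3 u w))))))))"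
    unfolding pairs_set by (simp add: conn_comm_def)
  have f1: "N 1 u (N 1 v w) - sgn2 a b *\<^sub>R N 1 v (N 1 u w) - N 1 (br u v) w = 0" using fl[of 1] by simp
  have f2: "N 2 u (N 2 v w) - sgn2 a b *\<^sub>R N 2 v (N 2 u w) - N 2 (br u v) w = 0" using fl[of 2] by simp
  have f3: "N 3 u (N 3 v w) - sgn2 a b *\<^sub>R N 3 v (N 3 u w) - N 3 (br u v) w = 0" using fl[of 3] by simp
  show ?thesis unfolding L R by (rule key[OF f1 f2 f3])
qed

end
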